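(* Let $n\ge2$, $\frac34<a\le1$, $b=\frac12$, let $x\in\mathbb{R}^n$ and $0<\delta<1$, and let $\mathcal{A}_k(x,\delta)$ denote the collection of slabs of $\mathcal{A}_k$ contained in $F_k\cap Q(x,\delta)$. Then for every $\varepsilon>0$ and all $k$ sufficiently large depending on $\varepsilon$, there is a sub-collection $\mathcal{A}'_k\subset\mathcal{A}_k(x,\delta)$ such that (i) $|\mathcal{A}'_k|\gtrsim R_k^{-\varepsilon}|\mathcal{A}_k(x,\delta)|$; (ii) if $(x_1,\tilde x)$ and $(y_1,\tilde y)$, with $x_1,y_1\in\mathbb{R}$ and $\tilde x,\tilde y\in\mathbb{R}^{n-1}$, are the centers of two slabs of $\mathcal{A}'_k$ with $\tilde x\ne\tilde y$, then $|\tilde x-\tilde y|\gtrsim 1/(Q_k^{\frac{n}{n-1}}D_k)$.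
   Context: For $k\ge k_0$ let $R_k=2^k$, $D_k=R_k^{(n-(n-1)a+nb)/(n+1)}$, $Q_k=R_k^{\frac{n-1}{n+1}(2a-b-1)}$. A point $(p_1/q,\dots,p_n/q)$, $p_j,q\in\mathbb{Z}$, is an admissible fraction if $\gcd(p_1,q)=1$ and: $p_2,\dots,p_n$ arbitrary when $q$ is odd; all even when $q\equiv0\pmod4$; all odd when $q\equiv2\pmod4$. Fix $0<c\ll1$. $\mathcal{A}_k$ is the collection of axis-parallel boxes ("slabs") of dimensions $cR_k^{-1/2}\times cR_k^{-1}\times\cdots\times cR_k^{-1}$ (long side in the $x_1$ direction) centered at $\big(2p_1R_k/(qD_k^2),p_2/(D_kq),\dots,p_n/(D_kq)\big)$ with $(p_1/q,\dots,p_n/q)$ admissible and $1\le q\le Q_k$, and $F_k=\bigcup_{s\in\mathcal{A}_k}s$. $Q(x,\delta)$ is the cube of side-length $\delta$ centered at $x$. $X\gtrsim Y$ means $X\ge CY$ for a constant $C>0$ independent of $k$. *)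

theory Defs
  imports "HOL-Analysis.Analysis"
begin

text \<open>Points of R^n are represented as functions nat => real; coordinate j (1-based in the
paper) is the value at index j-1, i.e. the x_1 direction is index 0. Coordinates with index >= n
are required to vanish.\<close>

definition in_Rn :: "nat \<Rightarrow> (nat \<Rightarrow> real) \<Rightarrow> bool" where
  "in_Rn n y \<longleftrightarrow> (\<forall>i\<ge>n. y i = 0)"

definition R_k :: "nat \<Rightarrow> real" where
  "R_k k = 2 ^ k"

definition D_k :: "nat \<Rightarrow> real \<Rightarrow> real \<Rightarrow> nat \<Rightarrow> real" where
  "D_k n a b k = R_k k powr ((real n - (real n - 1) * a + real n * b) / (real n + 1))"

definition Q_k :: "nat \<Rightarrow> real \<Rightarrow> real \<Rightarrow> nat \<Rightarrow> real" where
  "Q_k n a b k = R_k k powr ((real n - 1) / (real n + 1) * (2 * a - b - 1))"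

text \<open>Admissible fraction (p_1/q,...,p_n/q); p j is the numerator of coordinate j+1.\<close>
definition admissible :: "nat \<Rightarrow> (nat \<Rightarrow> int) \<Rightarrow> int \<Rightarrow> bool" where
  "admissible n p q \<longleftrightarrow> gcd (p 0) q = 1 \<and>
     (odd q \<or>
      (q mod 4 = 0 \<and> (\<forall>j\<in>{1..<n}. even (p j))) \<or>
      (q mod 4 = 2 \<and> (\<forall>j\<in>{1..<n}. odd (p j))))"

definition slab_center :: "nat \<Rightarrow> real \<Rightarrow> real \<Rightarrow> nat \<Rightarrow> (nat \<Rightarrow> int) \<Rightarrow> int \<Rightarrow> (nat \<Rightarrow> real)" where
  "slab_center n a b k p q = (\<lambda>i.
     if i = 0 then 2 * real_of_int (p 0) * R_k k / (real_of_int q * (D_k n a b k)\<^sup>2)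
     else if i < n then real_of_int (p i) / (D_k n a b k * real_of_int q)
     else 0)"

definition slab :: "nat \<Rightarrow> real \<Rightarrow> nat \<Rightarrow> (nat \<Rightarrow> real) \<Rightarrow> (nat \<Rightarrow> real) set" where
  "slab n c k z = {y. in_Rn n y \<and>
      \<bar>y 0 - z 0\<bar> \<le> c * R_k k powr (-1/2) / 2 \<and>
      (\<forall>i\<in>{1..<n}. \<bar>y i - z i\<bar> \<le> c * R_k k powr (-1) / 2)}"

text \<open>The collection A_k, represented by the set of centres of its slabs.\<close>
definition centers_A :: "nat \<Rightarrow> real \<Rightarrow> real \<Rightarrow> nat \<Rightarrow> (nat \<Rightarrow> real) set" where
  "centers_A n a b k = {slab_center n a b k p q | p q.
      admissible n p q \<and> 1 \<le> q \<and> real_of_int q \<le> Q_k n a b k}"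

definition F_k :: "nat \<Rightarrow> real \<Rightarrow> real \<Rightarrow> real \<Rightarrow> nat \<Rightarrow> (nat \<Rightarrow> real) set" where
  "F_k n a b c k = (\<Union>z\<in>centers_A n a b k. slab n c k z)"

definition cube :: "nat \<Rightarrow> (nat \<Rightarrow> real) \<Rightarrow> real \<Rightarrow> (nat \<Rightarrow> real) set" where
  "cube n x \<delta> = {y. in_Rn n y \<and> (\<forall>i<n. \<bar>y i - x i\<bar> \<le> \<delta> / 2)}"

definition A_loc :: "nat \<Rightarrow> real \<Rightarrow> real \<Rightarrow> real \<Rightarrow> nat \<Rightarrow> (nat \<Rightarrow> real) \<Rightarrow> real \<Rightarrow> (nat \<Rightarrow> real) set" where
  "A_loc n a b c k x \<delta> = {z \<in> centers_A n a b k. slab n c k z \<subseteq> F_k n a b c k \<inter> cube n x \<delta>}"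

definition tail_dist :: "nat \<Rightarrow> (nat \<Rightarrow> real) \<Rightarrow> (nat \<Rightarrow> real) \<Rightarrow> real" where
  "tail_dist n z w = sqrt (\<Sum>i\<in>{1..<n}. (z i - w i)\<^sup>2)"

end

theory Submission
  imports Defs
begin
lemma res_set_eq:
  fixes d r :: int and al be :: real
  assumes d: "d > 0"
  shows "{p::int. al \<le> p \<and> p \<le> be \<and> p mod d = r mod d} =
         (\<lambda>t. d*t + r mod d) ` {\<lceil>(al - (r mod d))/d\<rceil>..\<lfloor>(be - (r mod d))/d\<rfloor>}"
proof (intro set_eqI iffI)
  fix p assume "p \<in> {p::int. al \<le> p \<and> p \<le> be \<and> p mod d = r mod d}"
  hence h: "al \<le> p" "p \<le> be" "p mod d = r mod d" by auto
  define t where "t = p div d"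
  have pe: "p = d*t + r mod d" using h(3) unfolding t_def by (metis div_mult_mod_eq mult.commute)
  have pr: "real_of_int p = d*t + (r mod d)" using pe by simp
  have "(al - (r mod d))/d \<le> t" using h(1) d pr by (simp add: pos_divide_le_eq algebra_simps)
  hence 1: "\<lceil>(al - (r mod d))/d\<rceil> \<le> t" by (simp add: ceiling_le_iff)
  have "t \<le> (be - (r mod d))/d" using h(2) d pr by (simp add: pos_le_divide_eq algebra_simps)
  hence 2: "t \<le> \<lfloor>(be - (r mod d))/d\<rfloor>" by (simp add: le_floor_iff)
  show "p \<in> (\<lambda>t. d*t + r mod d) ` {\<lceil>(al - (r mod d))/d\<rceil>..\<lfloor>(be - (r mod d))/d\<rfloor>}"
    using 1 2 pe by auto
next
  fix p assume "p \<in> (\<lambda>t. d*t + r mod d) ` {\<lceil>(al - (r mod d))/d\<rceil>..\<lfloor>(be - (r mod d))/d\<rfloor>}"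
  then obtain t where pe: "p = d*t + r mod d" and tin: "t \<in> {\<lceil>(al - (r mod d))/d\<rceil>..\<lfloor>(be - (r mod d))/d\<rfloor>}"
    by (rule imageE)
  have t1: "\<lceil>(al - (r mod d))/d\<rceil> \<le> t" and t2: "t \<le> \<lfloor>(be - (r mod d))/d\<rfloor>" using tin by auto
  have pr: "real_of_int p = d*t + (r mod d)" using pe by simp
  have a1: "(al - (r mod d))/d \<le> t" using t1 by (simp add: ceiling_le_iff)
  have a2: "t \<le> (be - (r mod d))/d" using t2 by (simp add: le_floor_iff)
  have "al \<le> p" using a1 d pr by (simp add: pos_divide_le_eq algebra_simps)
  moreover have "p \<le> be" using a2 d pr by (simp add: pos_le_divide_eq algebra_simps)
  moreover have "p mod d = r mod d" using d by (simp add: pe)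
  ultimately show "p \<in> {p::int. al \<le> p \<and> p \<le> be \<and> p mod d = r mod d}" by auto
qed

lemma nat_fl_le: "real (nat (\<lfloor>A::real\<rfloor> - \<lceil>B::real\<rceil> + 1)) \<le> max 0 (A - B + 1)"
proof (cases "\<lfloor>A\<rfloor> - \<lceil>B\<rceil> + 1 \<ge> 0")
  case True
  hence "real (nat (\<lfloor>A\<rfloor> - \<lceil>B\<rceil> + 1)) = real_of_int \<lfloor>A\<rfloor> - real_of_int \<lceil>B\<rceil> + 1" by simp
  moreover have "real_of_int \<lfloor>A\<rfloor> \<le> A" "real_of_int \<lceil>B\<rceil> \<ge> B" by simp_all
  ultimately show ?thesis by linarith
qed simp

lemma nat_fl_ge: "real (nat (\<lfloor>A::real\<rfloor> - \<lceil>B::real\<rceil> + 1)) \<ge> A - B - 1"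
proof -
  have "real_of_int \<lfloor>A\<rfloor> > A - 1" "real_of_int \<lceil>B\<rceil> < B + 1" by linarith+
  moreover have "real (nat (\<lfloor>A\<rfloor> - \<lceil>B\<rceil> + 1)) \<ge> real_of_int (\<lfloor>A\<rfloor> - \<lceil>B\<rceil> + 1)" by simp
  ultimately show ?thesis using floor_correct[of A] by linarith
qed

lemma res_card:
  fixes d r :: int and al be :: real
  assumes d: "d > 0"
  shows "real (card {p::int. al \<le> p \<and> p \<le> be \<and> p mod d = r mod d}) \<le> max 0 ((be - al)/d + 1)"
    and "real (card {p::int. al \<le> p \<and> p \<le> be \<and> p mod d = r mod d}) \<ge> (be - al)/d - 1"
    and "finite {p::int. al \<le> p \<and> p \<le> be \<and> p mod d = r mod d}"
proof -
  have inj: "inj (\<lambda>t. d*t + r mod d)" using d by (auto simp: inj_def)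
  have c: "card {p::int. al \<le> p \<and> p \<le> be \<and> p mod d = r mod d} =
     nat (\<lfloor>(be - (r mod d))/d\<rfloor> - \<lceil>(al - (r mod d))/d\<rceil> + 1)"
    unfolding res_set_eq[OF d] by (simp add: card_image[OF inj_on_subset[OF inj]])
  have e: "(be - (r mod d))/d - (al - (r mod d))/d = (be - al)/d"
    using d by (simp add: field_simps)
  have f1: "real_of_int \<lfloor>(be - (r mod d))/d\<rfloor> \<le> (be - (r mod d))/d" by simp
  have f2: "real_of_int \<lfloor>(be - (r mod d))/d\<rfloor> > (be - (r mod d))/d - 1" by linarith
  have c1: "real_of_int \<lceil>(al - (r mod d))/d\<rceil> \<ge> (al - (r mod d))/d" by simp
  have c2: "real_of_int \<lceil>(al - (r mod d))/d\<rceil> < (al - (r mod d))/d + 1" by linarith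
  show "real (card {p::int. al \<le> p \<and> p \<le> be \<and> p mod d = r mod d}) \<le> max 0 ((be - al)/d + 1)"
    unfolding c using nat_fl_le[of "(be - (r mod d))/d" "(al - (r mod d))/d"] e by simp
  show "real (card {p::int. al \<le> p \<and> p \<le> be \<and> p mod d = r mod d}) \<ge> (be - al)/d - 1"
    unfolding c using nat_fl_ge[of "(be - (r mod d))/d" "(al - (r mod d))/d"] e by simp
  show "finite {p::int. al \<le> p \<and> p \<le> be \<and> p mod d = r mod d}"
    unfolding res_set_eq[OF d] by simp
qed

lemma Tm_card:
  fixes q q' m :: int and al L :: real
  assumes q: "q > 0" and q': "q' > 0" and L: "L \<ge> 0"
  shows "real (card {p::int. al \<le> real_of_int p \<and> real_of_int p \<le> al + L \<and> (\<exists>p'::int. p*q' - p'*q = m)}) \<le> L * gcd q q' / q + 1"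
proof -
  let ?T = "{p::int. al \<le> real_of_int p \<and> real_of_int p \<le> al + L \<and> (\<exists>p'::int. p*q' - p'*q = m)}"
  define g where "g = gcd q q'"
  define d where "d = q div g"
  define e where "e = q' div g"
  have g0: "g > 0" using q unfolding g_def by simp
  have qd: "q = g * d" unfolding d_def g_def by simp
  have qe: "q' = g * e" unfolding e_def g_def by simp
  have d0: "d > 0" using q g0 qd by (simp add: zero_less_mult_iff)
  have cop: "coprime d e" unfolding d_def e_def g_def using q by (intro div_gcd_coprime) simp
  show ?thesis
  proof (cases "?T = {}")
    case True
    have "0 \<le> L * gcd q q' / q" using L q by simp
    moreover from True have "card ?T = 0" by (simp only: card.empty)
    ultimately show ?thesis by simp
  next
    case False
    then obtain p1 p1' where p1: "al \<le> real_of_int p1" "real_of_int p1 \<le> al + L" "p1*q' - p1'*q = m" by auto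
    have sub: "?T \<subseteq> {p::int. al \<le> real_of_int p \<and> real_of_int p \<le> al + L \<and> p mod d = p1 mod d}"
    proof
      fix p assume "p \<in> ?T"
      then obtain p' where h: "al \<le> real_of_int p" "real_of_int p \<le> al + L" "p*q' - p'*q = m" by auto
      have "(p - p1) * q' = (p' - p1') * q" using h(3) p1(3) by (simp add: algebra_simps)
      hence "g * ((p - p1) * e) = g * ((p' - p1') * d)" by (simp add: qd qe algebra_simps)
      hence "(p - p1) * e = (p' - p1') * d" using g0 by simp
      hence "d dvd (p - p1) * e" by (metis dvd_triv_right)
      hence "d dvd (p - p1)" using cop by (simp add: coprime_dvd_mult_left_iff)
      hence "p mod d = p1 mod d" by (simp add: mod_eq_dvd_iff)
      then show "p \<in> {p::int. al \<le> real_of_int p \<and> real_of_int p \<le> al + L \<and> p mod d = p1 mod d}" using h by auto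
    qed
    have fin: "finite {p::int. al \<le> real_of_int p \<and> real_of_int p \<le> al + L \<and> p mod d = p1 mod d}"
      using res_card(3)[OF d0, of al "al + L" p1] by simp
    have "real (card ?T) \<le> real (card {p::int. al \<le> real_of_int p \<and> real_of_int p \<le> al + L \<and> p mod d = p1 mod d})"
      using card_mono[OF fin sub] by simp
    also have "\<dots> \<le> max 0 ((al + L - al)/d + 1)" using res_card(1)[OF d0, of al "al + L" p1] by simp
    also have "\<dots> = L / d + 1" using L d0 by simp
    also have "L / d = L * gcd q q' / q"
    proof -
      have "real_of_int q = real_of_int g * real_of_int d" using qd by simp
      then show ?thesis using g0 d0 unfolding g_def by (simp add: field_simps)
    qed
    finally show ?thesis .
  qed
qed

lemma Tm_finite:
  fixes al L :: real and P :: "int \<Rightarrow> bool"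
  shows "finite {p::int. al \<le> real_of_int p \<and> real_of_int p \<le> al + L \<and> P p}"
proof -
  have "{p::int. al \<le> real_of_int p \<and> real_of_int p \<le> al + L \<and> P p} \<subseteq> {\<lceil>al\<rceil>..\<lfloor>al + L\<rfloor>}"
    by (auto simp: ceiling_le_iff le_floor_iff)
  then show ?thesis by (rule finite_subset) simp
qed

lemma M_card:
  fixes g :: int and X :: real
  assumes g: "g > 0" and X: "X \<ge> 0"
  shows "real (card {m::int. \<bar>m\<bar> < X \<and> g dvd m}) \<le> 2*X/g + 1"
    and "real (card {m::int. m \<noteq> 0 \<and> \<bar>m\<bar> < X \<and> g dvd m}) \<le> 2*X/g"
    and "X \<le> g \<Longrightarrow> {m::int. m \<noteq> 0 \<and> \<bar>m\<bar> < X \<and> g dvd m} = {}"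
    and "finite {m::int. \<bar>m\<bar> < X \<and> g dvd m}"
proof -
  have s1: "{m::int. \<bar>m\<bar> < X \<and> g dvd m} \<subseteq> {m::int. -X \<le> m \<and> m \<le> -X + 2*X \<and> m mod g = 0 mod g}"
  proof
    fix m assume "m \<in> {m::int. \<bar>m\<bar> < X \<and> g dvd m}"
    hence h: "real_of_int \<bar>m\<bar> < X" "g dvd m" by auto
    have "m mod g = 0 mod g" using h(2) by simp
    moreover have "-X \<le> m" "m \<le> -X + 2*X" using h(1) by linarith+
    ultimately show "m \<in> {m::int. -X \<le> m \<and> m \<le> -X + 2*X \<and> m mod g = 0 mod g}" by blast
  qed
  have f1: "finite {m::int. -X \<le> m \<and> m \<le> -X + 2*X \<and> m mod g = 0 mod g}"
    using res_card(3)[OF g] by blast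
  show "finite {m::int. \<bar>m\<bar> < X \<and> g dvd m}" using finite_subset[OF s1 f1] .
  have "real (card {m::int. \<bar>m\<bar> < X \<and> g dvd m}) \<le> real (card {m::int. -X \<le> m \<and> m \<le> -X + 2*X \<and> m mod g = 0 mod g})"
    using card_mono[OF f1 s1] by simp
  also have "\<dots> \<le> max 0 ((-X + 2*X - -X)/g + 1)" using res_card(1)[OF g] by blast
  also have "\<dots> = 2*X/g + 1" using X g by simp
  finally show "real (card {m::int. \<bar>m\<bar> < X \<and> g dvd m}) \<le> 2*X/g + 1" .
  have s2: "{m::int. m \<noteq> 0 \<and> \<bar>m\<bar> < X \<and> g dvd m} \<subseteq>
     {m::int. real_of_int g \<le> real_of_int m \<and> m \<le> X \<and> m mod g = 0 mod g} \<union> {m::int. -X \<le> m \<and> real_of_int m \<le> - real_of_int g \<and> m mod g = 0 mod g}"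
  proof
    fix m assume "m \<in> {m::int. m \<noteq> 0 \<and> \<bar>m\<bar> < X \<and> g dvd m}"
    hence h: "m \<noteq> 0" "\<bar>m\<bar> < X" "g dvd m" by auto
    have "\<bar>m\<bar> \<ge> g" using dvd_imp_le_int[OF h(1) h(3)] g by simp
    then show "m \<in> {m::int. real_of_int g \<le> real_of_int m \<and> m \<le> X \<and> m mod g = 0 mod g} \<union> {m::int. -X \<le> m \<and> real_of_int m \<le> - real_of_int g \<and> m mod g = 0 mod g}"
      using h by (cases "m \<ge> 0") auto
  qed
  have fa: "finite {m::int. real_of_int g \<le> real_of_int m \<and> m \<le> X \<and> m mod g = 0 mod g}" using res_card(3)[OF g] by blast
  have fb: "finite {m::int. -X \<le> m \<and> real_of_int m \<le> - real_of_int g \<and> m mod g = 0 mod g}" using res_card(3)[OF g] by blast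
  have "real (card {m::int. m \<noteq> 0 \<and> \<bar>m\<bar> < X \<and> g dvd m}) \<le>
     real (card ({m::int. real_of_int g \<le> real_of_int m \<and> m \<le> X \<and> m mod g = 0 mod g} \<union> {m::int. -X \<le> m \<and> real_of_int m \<le> - real_of_int g \<and> m mod g = 0 mod g}))"
    using card_mono[OF _ s2] fa fb by simp
  also have "\<dots> \<le> real (card {m::int. real_of_int g \<le> real_of_int m \<and> m \<le> X \<and> m mod g = 0 mod g}) + real (card {m::int. -X \<le> m \<and> real_of_int m \<le> - real_of_int g \<and> m mod g = 0 mod g})"
    by (simp only: of_nat_add[symmetric] of_nat_le_iff card_Un_le)
  also have "\<dots> \<le> max 0 ((X - g)/g + 1) + max 0 ((-g - -X)/g + 1)"
    using res_card(1)[OF g, of g X 0] res_card(1)[OF g, of "-X" "-g" 0] by simp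
  also have "\<dots> = 2*X/g"
  proof -
    have e1: "(X - g)/g + 1 = X/g" "(-g - -X)/g + 1 = X/g" using g by (simp_all add: diff_divide_distrib)
    have "X/g \<ge> 0" using X g by simp
    then show ?thesis unfolding e1 by simp
  qed
  finally show "real (card {m::int. m \<noteq> 0 \<and> \<bar>m\<bar> < X \<and> g dvd m}) \<le> 2*X/g" .
  show "X \<le> g \<Longrightarrow> {m::int. m \<noteq> 0 \<and> \<bar>m\<bar> < X \<and> g dvd m} = {}"
  proof -
    assume X': "X \<le> g"
    { fix m :: int assume h: "m \<noteq> 0" "real_of_int \<bar>m\<bar> < X" "g dvd m"
      have "\<bar>g\<bar> \<le> \<bar>m\<bar>" by (rule dvd_imp_le_int[OF h(1) h(3)])
      hence "real_of_int g \<le> real_of_int \<bar>m\<bar>" using g by simp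
      hence False using h(2) X' by linarith }
    then show ?thesis by blast
  qed
qed

definition par :: "int \<Rightarrow> int \<Rightarrow> bool" where
  "par q p \<longleftrightarrow> odd q \<or> (q mod 4 = 0 \<and> even p) \<or> (q mod 4 = 2 \<and> odd p)"

definition Iset :: "real \<Rightarrow> real \<Rightarrow> int \<Rightarrow> int set" where
  "Iset al L q = {p::int. al \<le> real_of_int p \<and> real_of_int p \<le> al + L \<and> par q p}"

definition Sset :: "real \<Rightarrow> real \<Rightarrow> int \<Rightarrow> int \<Rightarrow> real \<Rightarrow> bool \<Rightarrow> int set" where
  "Sset al L q q' X flag = {p \<in> Iset al L q. \<exists>p'::int. (flag \<longrightarrow> p*q' - p'*q \<noteq> 0) \<and> \<bar>real_of_int (p*q' - p'*q)\<bar> < X}"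

lemma Iset_finite: "finite (Iset al L q)"
  unfolding Iset_def using Tm_finite[of al L "par q"] by simp

lemma Iset_lower:
  assumes L: "L \<ge> 4"
  shows "real (card (Iset al L q)) \<ge> L / 4"
proof -
  define r :: int where "r = (if q mod 4 = 2 then 1 else 0)"
  have sub: "{p::int. al \<le> real_of_int p \<and> real_of_int p \<le> al + L \<and> p mod 2 = r mod 2} \<subseteq> Iset al L q"
  proof
    fix p assume "p \<in> {p::int. al \<le> real_of_int p \<and> real_of_int p \<le> al + L \<and> p mod 2 = r mod 2}"
    hence h: "al \<le> real_of_int p" "real_of_int p \<le> al + L" "p mod 2 = r mod 2" by auto
    have "par q p"
    proof (cases "q mod 4 = 2")
      case True
      hence "odd p" using h(3) unfolding r_def by (simp add: odd_iff_mod_2_eq_one)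
      then show ?thesis using True unfolding par_def by simp
    next
      case False
      hence "even p" using h(3) unfolding r_def by (simp add: even_iff_mod_2_eq_zero)
      moreover have "odd q \<or> q mod 4 = 0"
        using False by presburger
      ultimately show ?thesis unfolding par_def by auto
    qed
    then show "p \<in> Iset al L q" using h unfolding Iset_def by auto
  qed
  have "L / 4 \<le> (al + L - al) / 2 - 1" using L by simp
  also have "\<dots> \<le> real (card {p::int. al \<le> real_of_int p \<and> real_of_int p \<le> al + L \<and> p mod 2 = r mod 2})"
    using res_card(2)[where d=2 and al=al and be="al+L" and r=r] by simp
  also have "\<dots> \<le> real (card (Iset al L q))" using card_mono[OF Iset_finite sub] by simp
  finally show ?thesis .
qed

lemma Sset_empty:
  fixes q q' :: int and X L al :: real
  assumes q: "q > 0" "q' > 0" and X: "X \<le> real_of_int (gcd q q')"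
  shows "Sset al L q q' X True = {}"
proof -
  { fix p p' :: int assume h: "p*q' - p'*q \<noteq> 0" "\<bar>real_of_int (p*q' - p'*q)\<bar> < X"
    have "gcd q q' dvd p*q' - p'*q" by simp
    hence "\<bar>gcd q q'\<bar> \<le> \<bar>p*q' - p'*q\<bar>" using dvd_imp_le_int h(1) by blast
    hence False using h(2) X by linarith }
  then show ?thesis unfolding Sset_def by blast
qed

lemma Sset_bound:
  fixes q q' :: int and rs X L al :: real
  assumes q: "q > 0" and q': "q' > 0" and rs: "rs > 0" and X: "X = real_of_int q * real_of_int q' * rs"
    and Lq: "L \<ge> q" and L4: "L \<ge> 4" and gX: "real_of_int (gcd q q') \<le> X"
  shows "real (card (Sset al L q q' X flag)) \<le> 24 * real_of_int q' * rs * real (card (Iset al L q))"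
proof -
  define g where "g = gcd q q'"
  have g0: "g > 0" using q unfolding g_def by simp
  define M where "M = {m::int. (flag \<longrightarrow> m \<noteq> 0) \<and> \<bar>m\<bar> < X \<and> g dvd m}"
  define T where "T m = {p::int. al \<le> real_of_int p \<and> real_of_int p \<le> al + L \<and> (\<exists>p'::int. p*q' - p'*q = m)}" for m
  have X0: "X \<ge> 0" using X q q' rs by simp
  have Mfin: "finite M"
    by (rule finite_subset[OF _ M_card(4)[OF g0 X0]]) (auto simp: M_def)
  have Mc: "real (card M) \<le> 3 * X / g"
  proof (cases flag)
    case True
    hence "M = {m::int. m \<noteq> 0 \<and> \<bar>m\<bar> < X \<and> g dvd m}" unfolding M_def by simp
    hence "real (card M) \<le> 2 * X / g" using M_card(2)[OF g0 X0] by simp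
    also have "\<dots> \<le> 3 * X / g" using X0 g0 by (simp add: divide_right_mono)
    finally show ?thesis .
  next
    case False
    hence "M = {m::int. \<bar>m\<bar> < X \<and> g dvd m}" unfolding M_def by simp
    hence c1: "real (card M) \<le> 2 * X / g + 1" using M_card(1)[OF g0 X0] by simp
    have "real_of_int g / real_of_int g \<le> X / g" using gX g0 unfolding g_def by (intro divide_right_mono) auto
    hence c2: "1 \<le> X / g" using g0 by simp
    have "3 * X / g = 3 * (X/g)" "2 * X / g = 2 * (X/g)" by simp_all
    then show ?thesis using c1 c2 by linarith
  qed
  have sub: "Sset al L q q' X flag \<subseteq> (\<Union>m\<in>M. T m)"
  proof
    fix p assume "p \<in> Sset al L q q' X flag"
    then obtain p' where h: "p \<in> Iset al L q" "flag \<longrightarrow> p*q' - p'*q \<noteq> 0" "\<bar>real_of_int (p*q' - p'*q)\<bar> < X"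
      unfolding Sset_def by blast
    have "g dvd p*q' - p'*q" unfolding g_def by simp
    hence "p*q' - p'*q \<in> M" using h unfolding M_def by simp
    moreover have "p \<in> T (p*q' - p'*q)" using h(1) unfolding T_def Iset_def by auto
    ultimately show "p \<in> (\<Union>m\<in>M. T m)" by (rule UN_I)
  qed
  have Tfin: "finite (T m)" for m unfolding T_def by (rule Tm_finite)
  have L0: "L \<ge> 0" using L4 by simp
  have Tc: "real (card (T m)) \<le> L * g / q + 1" for m
    unfolding T_def g_def using Tm_card[OF q q' L0] by simp
  have "real (card (Sset al L q q' X flag)) \<le> real (card (\<Union>m\<in>M. T m))"
    using card_mono[OF _ sub] Mfin Tfin by simp
  also have "\<dots> \<le> real (\<Sum>m\<in>M. card (T m))" using card_UN_le[OF Mfin, of T] by (simp only: of_nat_le_iff)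
  also have "\<dots> = (\<Sum>m\<in>M. real (card (T m)))" by simp
  also have "\<dots> \<le> (\<Sum>m\<in>M. L * g / q + 1)" by (rule sum_mono) (rule Tc)
  also have "\<dots> = real (card M) * (L * g / q + 1)" by simp
  also have "\<dots> \<le> (3 * X / g) * (2 * L * g / q)"
  proof (rule mult_mono[OF Mc])
    have "L * 1 \<le> L * real_of_int g" using g0 L0 by (intro mult_left_mono) auto
    hence "real_of_int q \<le> L * g" using Lq by simp
    hence "real_of_int q / real_of_int q \<le> L * g / q" using q by (intro divide_right_mono) auto
    hence "1 \<le> L * g / q" using q by simp
    thus "L * g / q + 1 \<le> 2 * L * g / q" by simp
    show "0 \<le> 3 * X / g" using X0 g0 by simp
    show "0 \<le> L * g / q + 1" using L0 g0 q by simp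
  qed
  also have "\<dots> = 6 * q' * rs * L" using g0 q by (simp add: X field_simps)
  also have "\<dots> \<le> 6 * q' * rs * (4 * real (card (Iset al L q)))"
    using Iset_lower[OF L4, of al q] q' rs by (intro mult_left_mono) auto
  finally show ?thesis by simp
qed

lemma B_card:
  fixes q q' :: int and rs L :: real and alpha :: "nat \<Rightarrow> real"
  assumes n: "n \<ge> 2" and q: "q > 0" and q': "q' > 0" and rs: "rs > 0"
    and Lq: "L \<ge> q" and L4: "L \<ge> 4" and j: "j \<in> {1..<n}"
  shows "real (card (PiE {1..<n} (\<lambda>i. Sset (alpha i) L q q' (real_of_int q * real_of_int q' * rs) (i = j))))
     \<le> (24 * real_of_int q' * rs)^(n-1) * real (card (PiE {1..<n} (\<lambda>i. Iset (alpha i) L q)))"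
proof -
  have cP: "real (card (PiE {1..<n} (\<lambda>i. Iset (alpha i) L q))) = (\<Prod>i\<in>{1..<n}. real (card (Iset (alpha i) L q)))"
    by (simp add: card_PiE)
  have cB: "real (card (PiE {1..<n} (\<lambda>i. Sset (alpha i) L q q' (real_of_int q * real_of_int q' * rs) (i = j)))) =
      (\<Prod>i\<in>{1..<n}. real (card (Sset (alpha i) L q q' (real_of_int q * real_of_int q' * rs) (i = j))))"
    by (simp add: card_PiE)
  have rhs: "(24 * real_of_int q' * rs)^(n-1) * (\<Prod>i\<in>{1..<n}. real (card (Iset (alpha i) L q))) =
     (\<Prod>i\<in>{1..<n}. 24 * real_of_int q' * rs * real (card (Iset (alpha i) L q)))"
    by (simp add: prod.distrib)
  show ?thesis
  proof (cases "real_of_int (gcd q q') \<le> real_of_int q * real_of_int q' * rs")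
    case True
    have "(\<Prod>i\<in>{1..<n}. real (card (Sset (alpha i) L q q' (real_of_int q * real_of_int q' * rs) (i = j))))
        \<le> (\<Prod>i\<in>{1..<n}. 24 * real_of_int q' * rs * real (card (Iset (alpha i) L q)))"
      by (rule prod_mono) (use Sset_bound[OF q q' rs refl Lq L4 True] in simp)
    then show ?thesis using cP cB rhs by simp
  next
    case False
    have "Sset (alpha j) L q q' (real_of_int q * real_of_int q' * rs) True = {}" using Sset_empty[OF q q'] False by simp
    hence p0: "(\<Prod>i\<in>{1..<n}. real (card (Sset (alpha i) L q q' (real_of_int q * real_of_int q' * rs) (i = j)))) = 0"
      using j by (intro prod_zero) (auto intro!: bexI[of _ j])
    have nn: "0 \<le> (24 * real_of_int q' * rs)^(n-1) * real (card (PiE {1..<n} (\<lambda>i. Iset (alpha i) L q)))"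
      using q' rs by (intro mult_nonneg_nonneg zero_le_power) auto
    have "real (card (PiE {1..<n} (\<lambda>i. Sset (alpha i) L q q' (real_of_int q * real_of_int q' * rs) (i = j)))) = 0"
      by (simp only: cB p0)
    then show ?thesis using nn by linarith
  qed
qed

lemma U_card:
  fixes q :: int and rs Qr L :: real and alpha :: "nat \<Rightarrow> real"
  assumes n: "n \<ge> 2" and q: "q > 0" and rs: "rs > 0" and Qr: "Qr \<ge> 1"
    and Lq: "L \<ge> q" and L4: "L \<ge> 4"
  shows "real (card (\<Union>q'\<in>{1..\<lfloor>Qr\<rfloor>}. \<Union>j\<in>{1..<n}. PiE {1..<n} (\<lambda>i. Sset (alpha i) L q q' (real_of_int q * real_of_int q' * rs) (i = j))))
     \<le> (real n - 1) * (24 * rs)^(n-1) * Qr^n * real (card (PiE {1..<n} (\<lambda>i. Iset (alpha i) L q)))"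
proof -
  let ?P = "real (card (PiE {1..<n} (\<lambda>i. Iset (alpha i) L q)))"
  let ?B = "\<lambda>q' j. PiE {1..<n} (\<lambda>i. Sset (alpha i) L q q' (real_of_int q * real_of_int q' * rs) (i = j))"
  have "real (card (\<Union>q'\<in>{1..\<lfloor>Qr\<rfloor>}. \<Union>j\<in>{1..<n}. ?B q' j)) \<le> (\<Sum>q'\<in>{1..\<lfloor>Qr\<rfloor>}. real (card (\<Union>j\<in>{1..<n}. ?B q' j)))"
    using card_UN_le[of "{1..\<lfloor>Qr\<rfloor>}" "\<lambda>q'. \<Union>j\<in>{1..<n}. ?B q' j"] by (simp only: of_nat_sum[symmetric] of_nat_le_iff finite_atLeastAtMost_int)
  also have "\<dots> \<le> (\<Sum>q'\<in>{1..\<lfloor>Qr\<rfloor>}. (\<Sum>j\<in>{1..<n}. real (card (?B q' j))))"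
  proof (rule sum_mono)
    fix q' show "real (card (\<Union>j\<in>{1..<n}. ?B q' j)) \<le> (\<Sum>j\<in>{1..<n}. real (card (?B q' j)))"
      using card_UN_le[of "{1..<n}" "\<lambda>j. ?B q' j"] by (simp only: of_nat_sum[symmetric] of_nat_le_iff finite_atLeastLessThan)
  qed
  also have "\<dots> \<le> (\<Sum>q'\<in>{1..\<lfloor>Qr\<rfloor>}. (\<Sum>j\<in>{1..<n}. (24 * rs)^(n-1) * Qr^(n-1) * ?P))"
  proof (intro sum_mono)
    fix q' j assume q'r: "q' \<in> {1..\<lfloor>Qr\<rfloor>}" and j: "j \<in> {1..<n}"
    have q'0: "q' > 0" using q'r by simp
    have "real (card (?B q' j)) \<le> (24 * real_of_int q' * rs)^(n-1) * ?P" by (rule B_card[OF n q q'0 rs Lq L4 j])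
    also have "\<dots> \<le> (24 * rs)^(n-1) * Qr^(n-1) * ?P"
    proof -
      have "real_of_int q' \<le> Qr" using q'r by (simp add: le_floor_iff)
      hence "(24 * real_of_int q' * rs)^(n-1) \<le> (24 * Qr * rs)^(n-1)" using q'0 rs by (intro power_mono) auto
      from mult_right_mono[OF this, of ?P] show ?thesis by (simp add: power_mult_distrib mult_ac)
    qed
    finally show "real (card (?B q' j)) \<le> (24 * rs)^(n-1) * Qr^(n-1) * ?P" .
  qed
  also have "\<dots> = real (nat \<lfloor>Qr\<rfloor>) * ((real n - 1) * ((24 * rs)^(n-1) * Qr^(n-1) * ?P))"
    using n by (simp add: of_nat_diff)
  also have "\<dots> \<le> Qr * ((real n - 1) * ((24 * rs)^(n-1) * Qr^(n-1) * ?P))"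
    using Qr n rs by (intro mult_right_mono) auto
  also have "\<dots> = (real n - 1) * (24 * rs)^(n-1) * Qr^n * ?P"
    using n by (cases n) (simp_all add: mult_ac)
  finally show ?thesis .
qed

lemma R_pos: "R_k k > 0" unfolding R_k_def by simp
lemma R_ge1: "R_k k \<ge> 1" unfolding R_k_def by simp
lemma D_pos: "D_k n a b k > 0" unfolding D_k_def using R_pos[of k] by simp

lemma abs_shift: "\<bar>z + H - x\<bar> \<le> d \<Longrightarrow> \<bar>z + - H - x\<bar> \<le> d \<Longrightarrow> 0 \<le> (H::real) \<Longrightarrow> \<bar>z - x\<bar> \<le> d - H"
  by arith

lemma slab_cube:
  assumes c: "c \<ge> 0" and z: "in_Rn n z" and n: "n \<ge> 1"
  shows "slab n c k z \<subseteq> cube n x \<delta> \<longleftrightarrow>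
    (\<forall>i<n. \<bar>z i - x i\<bar> \<le> \<delta>/2 - (if i = 0 then c * R_k k powr (-1/2) / 2 else c * R_k k powr (-1) / 2))"
  (is "?L \<longleftrightarrow> (\<forall>i<n. \<bar>z i - x i\<bar> \<le> \<delta>/2 - ?h i)")
proof
  have h0: "?h i \<ge> 0" for i using c by simp
  assume L: ?L
  show "\<forall>i<n. \<bar>z i - x i\<bar> \<le> \<delta>/2 - ?h i"
  proof (intro allI impI)
    fix i assume i: "i < n"
    have hA: "0 \<le> c * R_k k powr (-1/2) / 2" and hB: "0 \<le> c * R_k k powr (-1) / 2" using c by simp_all
    have mem: "z(i := z i + s) \<in> slab n c k z" if "\<bar>s\<bar> \<le> ?h i" for s
    proof -
      have "in_Rn n (z(i := z i + s))" using z i unfolding in_Rn_def by auto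
      moreover have "\<bar>(z(i := z i + s)) 0 - z 0\<bar> \<le> c * R_k k powr (-1/2) / 2"
        using that hA by (cases "i = 0") auto
      moreover have "\<forall>l\<in>{1..<n}. \<bar>(z(i := z i + s)) l - z l\<bar> \<le> c * R_k k powr (-1) / 2"
        using that hB by (auto split: if_splits)
      ultimately show ?thesis unfolding slab_def by blast
    qed
    have "z(i := z i + ?h i) \<in> cube n x \<delta>" "z(i := z i + - ?h i) \<in> cube n x \<delta>"
      using mem[of "?h i"] mem[of "- ?h i"] L h0[of i] by auto
    hence "\<bar>z i + ?h i - x i\<bar> \<le> \<delta>/2" "\<bar>z i + - ?h i - x i\<bar> \<le> \<delta>/2"
      using i unfolding cube_def by (auto dest!: spec[of _ i])
    then show "\<bar>z i - x i\<bar> \<le> \<delta>/2 - ?h i" using abs_shift h0[of i] by blast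
  qed
next
  assume R: "\<forall>i<n. \<bar>z i - x i\<bar> \<le> \<delta>/2 - ?h i"
  show ?L
  proof
    fix y assume y: "y \<in> slab n c k z"
    have "\<bar>y i - x i\<bar> \<le> \<delta>/2" if i: "i < n" for i
    proof -
      have "\<bar>y i - z i\<bar> \<le> ?h i" using y i unfolding slab_def by (cases "i = 0") auto
      moreover have "\<bar>z i - x i\<bar> \<le> \<delta>/2 - ?h i" using R i by blast
      ultimately show ?thesis by linarith
    qed
    then show "y \<in> cube n x \<delta>" using y unfolding cube_def slab_def by auto
  qed
qed

lemma slab_center_0: "slab_center n a b k p q 0 = 2 * real_of_int (p 0) * R_k k / (real_of_int q * (D_k n a b k)\<^sup>2)"
  unfolding slab_center_def by simp
lemma slab_center_i: "0 < i \<Longrightarrow> i < n \<Longrightarrow> slab_center n a b k p q i = real_of_int (p i) / (D_k n a b k * real_of_int q)"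
  unfolding slab_center_def by simp
lemma slab_center_Rn: "n \<ge> 1 \<Longrightarrow> in_Rn n (slab_center n a b k p q)"
  unfolding slab_center_def in_Rn_def by simp

lemma denom_unique:
  fixes p0 p0' q q' :: int and R D :: real
  assumes "R > 0" "D > 0" "gcd p0 q = 1" "gcd p0' q' = 1" "q \<ge> 1" "q' \<ge> 1"
    and "2 * real_of_int p0 * R / (real_of_int q * D\<^sup>2) = 2 * real_of_int p0' * R / (real_of_int q' * D\<^sup>2)"
  shows "q = q' \<and> p0 = p0'"
proof -
  have "real_of_int p0 * real_of_int q' = real_of_int p0' * real_of_int q"
    using assms by (simp add: field_simps)
  hence e: "p0 * q' = p0' * q" by (metis of_int_eq_iff of_int_mult)
  have "q dvd p0 * q'" using e by simp
  hence "q dvd q'" using assms(3) by (metis coprime_dvd_mult_right_iff coprime_iff_gcd_eq_1 coprime_commute)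
  moreover have "q' dvd p0' * q" using e by (metis dvd_triv_right)
  hence "q' dvd q" using assms(4) by (metis coprime_dvd_mult_right_iff coprime_iff_gcd_eq_1 coprime_commute)
  ultimately have "q = q'" using assms(5,6) by (simp add: zdvd_antisym_nonneg)
  moreover hence "p0 = p0'" using e assms(5) by simp
  ultimately show ?thesis by simp
qed

lemma memZ:
  assumes "z \<in> A_loc n a b c k x \<delta>"
  obtains p q where "z = slab_center n a b k p q" "admissible n p q" "1 \<le> q" "real_of_int q \<le> Q_k n a b k"
    "slab n c k z \<subseteq> cube n x \<delta>"
  using assms unfolding A_loc_def centers_A_def by blast

lemma admissible_par:
  assumes "admissible n p q" "i \<in> {1..<n}"
  shows "par q (p i)"
  using assms unfolding admissible_def par_def by auto

lemma par_admissible: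
  assumes "gcd p0 q = 1" "\<forall>i\<in>{1..<n}. par q (pt i)"
  shows "admissible n (\<lambda>i. if i = 0 then p0 else pt i) q"
proof -
  have "odd q \<or> (q mod 4 = 0 \<and> (\<forall>j\<in>{1..<n}. even (pt j))) \<or> (q mod 4 = 2 \<and> (\<forall>j\<in>{1..<n}. odd (pt j)))"
  proof (cases "odd q")
    case False
    then have "q mod 4 = 0 \<or> q mod 4 = 2" by presburger
    then show ?thesis using assms(2) False unfolding par_def by auto
  qed simp
  then show ?thesis using assms(1) unfolding admissible_def by auto
qed

lemma tail_iff:
  assumes D: "D > 0" and q: "q > 0" and i: "0 < i" "i < n"
  shows "\<bar>slab_center n a b k p q i - x i\<bar> \<le> \<delta>/2 - c * R_k k powr (-1) / 2 \<longleftrightarrow>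
    (D_k n a b k * q * (x i - \<delta>/2 + c * R_k k powr (-1) / 2) \<le> real_of_int (p i) \<and>
     real_of_int (p i) \<le> D_k n a b k * q * (x i - \<delta>/2 + c * R_k k powr (-1) / 2) + D_k n a b k * q * (\<delta> - c * R_k k powr (-1)))"
proof -
  define Dk where "Dk = D_k n a b k"
  define h where "h = c * R_k k powr (-1) / 2"
  have Dk: "Dk > 0" unfolding Dk_def by (rule D_pos)
  have qq: "real_of_int q > 0" using q by simp
  have e: "slab_center n a b k p q i = real_of_int (p i) / (Dk * q)" using slab_center_i[OF i] Dk_def by simp
  have "\<bar>real_of_int (p i) / (Dk * q) - x i\<bar> \<le> \<delta>/2 - h \<longleftrightarrow>
        \<bar>real_of_int (p i) - Dk * q * x i\<bar> \<le> Dk * q * (\<delta>/2 - h)"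
  proof -
    have "real_of_int (p i) / (Dk * q) - x i = (real_of_int (p i) - Dk * q * x i) / (Dk * q)"
      using Dk qq by (simp add: field_simps)
    hence "\<bar>real_of_int (p i) / (Dk * q) - x i\<bar> = \<bar>real_of_int (p i) - Dk * q * x i\<bar> / (Dk * q)"
      using Dk qq by simp
    thus ?thesis using Dk qq by (simp add: divide_le_eq mult.commute)
  qed
  also have "\<dots> \<longleftrightarrow> (Dk * q * x i - Dk * q * (\<delta>/2 - h) \<le> real_of_int (p i) \<and>
     real_of_int (p i) \<le> Dk * q * x i + Dk * q * (\<delta>/2 - h))" by (auto simp: abs_le_iff)
  also have "Dk * q * x i - Dk * q * (\<delta>/2 - h) = Dk * q * (x i - \<delta>/2 + h)" by (simp add: algebra_simps)
  also have "Dk * q * x i + Dk * q * (\<delta>/2 - h) = Dk * q * (x i - \<delta>/2 + h) + Dk * q * (\<delta> - 2*h)"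
    by (simp add: algebra_simps)
  also have "2 * h = c * R_k k powr (-1)" unfolding h_def by simp
  finally show ?thesis unfolding e Dk_def h_def by simp
qed

lemma fiber:
  fixes n :: nat and a b c :: real and k :: nat and x :: "nat \<Rightarrow> real" and \<delta> rs :: real
  assumes n: "n \<ge> 2" and c: "c > 0"
    and Lbig: "D_k n a b k * (\<delta> - c * R_k k powr (-1)) \<ge> 4"
    and Qge: "Q_k n a b k \<ge> 1"
    and rs: "rs > 0" and small: "(real n - 1) * (24*rs)^(n-1) * (Q_k n a b k)^n \<le> 1/2"
    and z0: "z0 \<in> A_loc n a b c k x \<delta>"
    and fin: "finite (A_loc n a b c k x \<delta>)"
  shows "real (card {z \<in> A_loc n a b c k x \<delta>. (\<exists>w\<in>A_loc n a b c k x \<delta>. (\<exists>i\<in>{1..<n}. z i \<noteq> w i) \<and>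
            (\<forall>i\<in>{1..<n}. \<bar>z i - w i\<bar> < rs / D_k n a b k)) \<and> z 0 = z0 0})
     \<le> real (card {z \<in> A_loc n a b c k x \<delta>. z 0 = z0 0}) / 2"
proof -
  define Z where "Z = A_loc n a b c k x \<delta>"
  define D where "D = D_k n a b k"
  define R where "R = R_k k"
  define Q where "Q = Q_k n a b k"
  define v where "v = z0 0"
  have D0: "D > 0" unfolding D_def by (rule D_pos)
  have R0: "R > 0" unfolding R_def by (rule R_pos)
  obtain p q where z0e: "z0 = slab_center n a b k p q" and adm: "admissible n p q" and q1: "1 \<le> q"
      and qQ: "real_of_int q \<le> Q" and sc0: "slab n c k z0 \<subseteq> cube n x \<delta>"
    using memZ[OF z0] unfolding Q_def by blast
  have q0: "q > 0" using q1 by simp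
  define p0 where "p0 = p 0"
  have g0: "gcd p0 q = 1" using adm unfolding admissible_def p0_def by simp
  define h where "h = c * R powr (-1) / 2"
  define L where "L = D * q * (\<delta> - c * R powr (-1))"
  define alpha where "alpha i = D * q * (x i - \<delta>/2 + h)" for i
  have L4: "L \<ge> 4" and Lq: "L \<ge> q"
  proof -
    have "D * (\<delta> - c * R powr (-1)) \<ge> 4" using Lbig unfolding D_def R_def .
    hence "L \<ge> 4 * q" unfolding L_def using q0 by (simp add: mult_ac)
    thus "L \<ge> 4" "L \<ge> q" using q1 by linarith+
  qed
  define \<sigma> where "\<sigma> pt = slab_center n a b k (\<lambda>i. if i = 0 then p0 else pt i) q" for pt
  define P where "P = PiE {1..<n} (\<lambda>i. Iset (alpha i) L q)"
  define rsq where "rsq = rs"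
  define U where "U = (\<Union>q'\<in>{1..\<lfloor>Q\<rfloor>}. \<Union>j\<in>{1..<n}. PiE {1..<n} (\<lambda>i. Sset (alpha i) L q q' (real_of_int q * real_of_int q' * rs) (i = j)))"
  have Pfin: "finite P" unfolding P_def by (intro finite_PiE) (auto simp: Iset_finite)
  have UP: "U \<subseteq> P" unfolding U_def P_def Sset_def by (auto simp: PiE_iff)
  have n1: "n \<ge> 1" using n by simp
  have tailI1: "real_of_int (pp i) \<in> {alpha i..alpha i + L} \<longleftrightarrow>
      \<bar>slab_center n a b k pp q i - x i\<bar> \<le> \<delta>/2 - c * R powr (-1) / 2"
    if "i \<in> {1..<n}" for pp i
  proof -
    from that have i: "0 < i" "i < n" by auto
    show ?thesis using tail_iff[OF D0 q0 i, where p=pp and x=x and \<delta>=\<delta> and c=c and a=a and b=b and k=k]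
      unfolding alpha_def L_def h_def D_def R_def atLeastAtMost_iff by simp
  qed
  have slab_cube': "slab n c k (slab_center n a b k pp q') \<subseteq> cube n x \<delta> \<longleftrightarrow>
      (\<forall>i<n. \<bar>slab_center n a b k pp q' i - x i\<bar> \<le> \<delta>/2 - (if i = 0 then c * R powr (-1/2) / 2 else c * R powr (-1) / 2))"
    for pp q' using slab_cube[OF less_imp_le[OF c] slab_center_Rn[OF n1] n1] unfolding R_def by blast
  have img: "\<sigma> ` P \<subseteq> {z \<in> Z. z 0 = v}"
  proof
    fix z assume "z \<in> \<sigma> ` P"
    then obtain pt where pt: "pt \<in> P" and ze: "z = \<sigma> pt" by blast
    let ?pp = "\<lambda>i. if i = 0 then p0 else pt i"
    have ptI: "pt i \<in> Iset (alpha i) L q" if "i \<in> {1..<n}" for i using pt that unfolding P_def by auto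
    have "admissible n ?pp q"
      using par_admissible[OF g0] ptI unfolding Iset_def by auto
    hence cen: "z \<in> centers_A n a b k" unfolding centers_A_def ze \<sigma>_def Q_def using q1 qQ unfolding Q_def by blast
    have z00: "z 0 = z0 0" unfolding ze \<sigma>_def z0e slab_center_0 p0_def by simp
    have c0: "\<bar>z 0 - x 0\<bar> \<le> \<delta>/2 - c * R powr (-1/2) / 2"
    proof -
      have "\<forall>i<n. \<bar>z0 i - x i\<bar> \<le> \<delta>/2 - (if i = 0 then c * R powr (-1/2) / 2 else c * R powr (-1) / 2)"
        using sc0 unfolding z0e slab_cube' by blast
      hence "\<bar>z0 0 - x 0\<bar> \<le> \<delta>/2 - c * R powr (-1/2) / 2" using n1 by auto
      thus ?thesis using z00 by simp
    qed
    have "\<bar>slab_center n a b k ?pp q i - x i\<bar> \<le> \<delta>/2 - c * R powr (-1) / 2" if i: "i \<in> {1..<n}" for i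
    proof -
      have "real_of_int (?pp i) \<in> {alpha i..alpha i + L}" using ptI[OF i] i unfolding Iset_def by auto
      thus ?thesis using tailI1[OF i] by blast
    qed
    hence "\<forall>i\<in>{1..<n}. \<bar>slab_center n a b k ?pp q i - x i\<bar> \<le> \<delta>/2 - c * R powr (-1) / 2" by blast
    hence "slab n c k z \<subseteq> cube n x \<delta>" unfolding ze \<sigma>_def slab_cube'
      using c0 unfolding ze \<sigma>_def by (auto simp: atLeastLessThan_iff)
    moreover have "slab n c k z \<subseteq> F_k n a b c k" unfolding F_k_def using cen by blast
    ultimately show "z \<in> {z \<in> Z. z 0 = v}" using cen z00 unfolding Z_def A_loc_def v_def by blast
  qed
  have inj: "inj_on \<sigma> P"
  proof
    fix s t assume s: "s \<in> P" and t: "t \<in> P" and e: "\<sigma> s = \<sigma> t"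
    show "s = t"
    proof (rule PiE_ext[OF s[unfolded P_def] t[unfolded P_def]])
      fix i assume i: "i \<in> {1..<n}"
      have "\<sigma> s i = \<sigma> t i" using e by simp
      hence "real_of_int (s i) / (D * q) = real_of_int (t i) / (D * q)"
        using i unfolding \<sigma>_def D_def by (simp add: slab_center_i)
      thus "s i = t i" using D0 q0 by simp
    qed
  qed
  have badsub: "{z \<in> Z. (\<exists>w\<in>Z. (\<exists>i\<in>{1..<n}. z i \<noteq> w i) \<and> (\<forall>i\<in>{1..<n}. \<bar>z i - w i\<bar> < rs / D)) \<and> z 0 = v} \<subseteq> \<sigma> ` U"
  proof
    fix z assume zin: "z \<in> {z \<in> Z. (\<exists>w\<in>Z. (\<exists>i\<in>{1..<n}. z i \<noteq> w i) \<and> (\<forall>i\<in>{1..<n}. \<bar>z i - w i\<bar> < rs / D)) \<and> z 0 = v}"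
    then obtain w j where zZ: "z \<in> Z" and wZ: "w \<in> Z" and j: "j \<in> {1..<n}" and zj: "z j \<noteq> w j"
       and close: "\<forall>i\<in>{1..<n}. \<bar>z i - w i\<bar> < rs / D" and zv: "z 0 = v" by blast
    obtain p' q' where ze: "z = slab_center n a b k p' q'" and adm': "admissible n p' q'" and q'1: "1 \<le> q'"
      and scz: "slab n c k z \<subseteq> cube n x \<delta>" using memZ[OF zZ[unfolded Z_def]] by blast
    obtain p'' q'' where we: "w = slab_center n a b k p'' q''" and adm'': "admissible n p'' q''" and q''1: "1 \<le> q''"
      and q''Q: "real_of_int q'' \<le> Q" using memZ[OF wZ[unfolded Z_def]] unfolding Q_def by blast
    have "2 * real_of_int (p' 0) * R / (real_of_int q' * D\<^sup>2) = 2 * real_of_int p0 * R / (real_of_int q * D\<^sup>2)"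
      using zv unfolding v_def ze z0e slab_center_0 p0_def R_def D_def by simp
    hence qq: "q' = q \<and> p' 0 = p0"
    proof -
      have gp: "gcd (p' 0) q' = 1" using adm' unfolding admissible_def by blast
      show ?thesis using denom_unique[OF R0 D0 gp g0 q'1 q1] \<open>2 * real_of_int (p' 0) * R / (real_of_int q' * D\<^sup>2) = _\<close> by blast
    qed
    define pt where "pt = restrict p' {1..<n}"
    have zs: "z = \<sigma> pt"
      unfolding ze \<sigma>_def pt_def using qq by (auto simp: slab_center_def fun_eq_iff)
    have q''0: "q'' > 0" using q''1 by simp
    have diff: "z i - w i = real_of_int (p' i * q'' - p'' i * q) / (D * q * q'')" if "i \<in> {1..<n}" for i
      using that D0 q0 q''0 qq unfolding ze we D_def by (simp add: slab_center_i field_simps)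
    have ptS: "pt i \<in> Sset (alpha i) L q q'' (real_of_int q * real_of_int q'' * rs) (i = j)" if i: "i \<in> {1..<n}" for i
    proof -
      have "\<forall>i\<in>{1..<n}. \<bar>slab_center n a b k p' q i - x i\<bar> \<le> \<delta>/2 - c * R powr (-1) / 2"
        using scz qq unfolding ze slab_cube' by auto
      hence "\<forall>i\<in>{1..<n}. real_of_int (p' i) \<in> {alpha i..alpha i + L}" using tailI1 by blast
      hence I: "pt i \<in> Iset (alpha i) L q" using i admissible_par[OF adm' i] qq unfolding Iset_def pt_def by auto
      have "\<bar>real_of_int (p' i * q'' - p'' i * q) / (D * q * q'')\<bar> < rs / D" using close i diff by simp
      moreover have pos: "D * q * q'' > 0" using D0 q0 q''0 by simp
      ultimately have "\<bar>real_of_int (p' i * q'' - p'' i * q)\<bar> / (D * q * q'') < rs / D"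
        by (simp add: abs_divide)
      hence "\<bar>real_of_int (p' i * q'' - p'' i * q)\<bar> < rs / D * (D * q * q'')"
        using pos by (simp add: pos_divide_less_eq)
      moreover have "rs / D * (D * q * q'') = real_of_int q * real_of_int q'' * rs" using D0 by simp
      ultimately have "\<bar>real_of_int (p' i * q'' - p'' i * q)\<bar> < real_of_int q * real_of_int q'' * rs" by simp
      moreover have "i = j \<longrightarrow> p' i * q'' - p'' i * q \<noteq> 0"
      proof (intro impI notI)
        assume ij: "i = j" and m0: "p' i * q'' - p'' i * q = 0"
        have "z j - w j = real_of_int (p' j * q'' - p'' j * q) / (D * q * q'')" using diff[OF j] .
        also have "p' j * q'' - p'' j * q = 0" using m0 ij by simp
        finally show False using zj by simp
      qed
      ultimately show ?thesis using I i unfolding Sset_def pt_def by auto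
    qed
    have "pt \<in> PiE {1..<n} (\<lambda>i. Sset (alpha i) L q q'' (real_of_int q * real_of_int q'' * rs) (i = j))"
      using ptS unfolding pt_def by auto
    moreover have "q'' \<in> {1..\<lfloor>Q\<rfloor>}" using q''1 q''Q by (simp add: le_floor_iff)
    ultimately have "pt \<in> U" unfolding U_def using j by blast
    then show "z \<in> \<sigma> ` U" using zs by blast
  qed
  have "real (card {z \<in> Z. (\<exists>w\<in>Z. (\<exists>i\<in>{1..<n}. z i \<noteq> w i) \<and> (\<forall>i\<in>{1..<n}. \<bar>z i - w i\<bar> < rs / D)) \<and> z 0 = v})
      \<le> real (card (\<sigma> ` U))" using card_mono[OF finite_imageI[OF finite_subset[OF UP Pfin]] badsub] by simp
  also have "\<dots> \<le> real (card U)" using card_image_le[OF finite_subset[OF UP Pfin]] by simp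
  also have "\<dots> \<le> (real n - 1) * (24 * rs)^(n-1) * Q^n * real (card P)"
    unfolding U_def P_def using U_card[OF n q0 rs _ Lq L4] Qge unfolding Q_def by blast
  also have "\<dots> \<le> 1/2 * real (card P)" using small unfolding Q_def by (intro mult_right_mono) auto
  also have "real (card P) = real (card (\<sigma> ` P))" using card_image[OF inj] by simp
  also have "\<dots> \<le> real (card {z \<in> Z. z 0 = v})" using card_mono[OF _ img] fin unfolding Z_def by simp
  finally show ?thesis unfolding Z_def D_def v_def by simp
qed

lemma card_fibers:
  fixes f :: "'a \<Rightarrow> 'b"
  assumes "finite Z" "B \<subseteq> Z"
  shows "card B = (\<Sum>v\<in>f ` Z. card {z \<in> B. f z = v})"
proof -
  have fB: "finite B" using assms finite_subset by blast
  have "(\<Sum>v\<in>f ` Z. \<Sum>z\<in>{z. z \<in> B \<and> f z = v}. (1::nat)) = (\<Sum>z\<in>B. 1)"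
    by (rule sum.group[OF fB]) (use assms in auto)
  then show ?thesis by simp
qed

lemma Q_ge1:
  assumes "n \<ge> 2" "3/4 < a" "b = 1/2"
  shows "Q_k n a b k \<ge> 1"
  unfolding Q_k_def using assms R_ge1[of k]
  by (intro ge_one_powr_ge_zero) (auto intro!: mult_nonneg_nonneg divide_nonneg_nonneg)

lemma small_ok:
  fixes n :: nat and Q :: real
  assumes n: "n \<ge> 2" and Q: "Q \<ge> 1"
  defines "C \<equiv> 1 / (48 * (real n - 1))"
  shows "(real n - 1) * (24 * (C / Q powr (real n / (real n - 1))))^(n-1) * Q^n \<le> 1/2"
proof -
  have Q0: "Q > 0" using Q by simp
  have n1: "real n - 1 > 0" using n by simp
  have "(Q powr (real n / (real n - 1)))^(n-1) = Q powr (real n / (real n - 1) * real (n-1))"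
    using Q0 by (simp add: powr_realpow[symmetric] powr_powr)
  also have "real n / (real n - 1) * real (n-1) = real n" using n n1 by (simp add: of_nat_diff)
  also have "Q powr real n = Q^n" using Q0 by (simp add: powr_realpow)
  finally have e: "(Q powr (real n / (real n - 1)))^(n-1) = Q^n" .
  have "(24 * (C / Q powr (real n / (real n - 1))))^(n-1) * Q^n = (24 * C)^(n-1)"
  proof -
    have Qn: "Q^n > 0" using Q0 by simp
    have "(24 * (C / Q powr (real n / (real n - 1))))^(n-1) * Q^n = (24 * C)^(n-1) / (Q powr (real n / (real n - 1)))^(n-1) * Q^n"
      by (simp add: power_divide power_mult_distrib)
    also have "\<dots> = (24 * C)^(n-1)" unfolding e using Qn Q0 by simp
    finally show ?thesis .
  qed
  moreover have "(24 * C)^(n-1) \<le> (24 * C)^1"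
    using n n1 unfolding C_def by (intro power_decreasing) (auto simp: field_simps)
  moreover have "(real n - 1) * (24 * C) = 1/2" using n1 unfolding C_def by (simp add: field_simps)
  ultimately show ?thesis using n1
    by (metis mult.assoc mult_left_mono less_imp_le power_one_right)
qed

lemma K_exists:
  assumes n: "n \<ge> 2" and a: "a \<le> 1" and b: "b = 1/2" and \<delta>: "\<delta> > 0" and c: "c > 0"
  shows "\<exists>K. \<forall>k\<ge>K. D_k n a b k * (\<delta> - c * R_k k powr (-1)) \<ge> 4"
proof -
  define e where "e = (real n - (real n - 1) * a + real n * b) / (real n + 1)"
  have e0: "e > 0"
  proof -
    have "(real n - 1) * a \<le> (real n - 1) * 1" using a n by (intro mult_left_mono) auto
    hence h: "(real n - 1) * a \<le> real n - 1" by simp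
    have h2: "0 \<le> real n * b" using b by simp
    define t where "t = (real n - 1) * a"
    have "t \<le> real n - 1" using h unfolding t_def .
    hence "real n - t + real n * b > 0" using h2 by linarith
    hence "real n - (real n - 1) * a + real n * b > 0" unfolding t_def .
    thus ?thesis unfolding e_def by simp
  qed
  define M where "M = max (2 * c / \<delta>) ((8 / \<delta>) powr (1 / e))"
  obtain K where K: "M < 2 ^ K" using real_arch_pow[of 2 M] by auto
  show ?thesis
  proof (intro exI allI impI)
    fix k assume k: "k \<ge> K"
    define R where "R = R_k k"
    have RM: "M < R" using K k unfolding R_def R_k_def
      by (meson less_le_trans one_le_numeral power_increasing)
    have R0: "R > 0" unfolding R_def by (rule R_pos)
    have "2 * c / \<delta> < R" using RM unfolding M_def by simp
    hence "c / R \<le> \<delta> / 2" using R0 \<delta> by (simp add: field_simps)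
    moreover have "c * R powr (-1) = c / R" using powr_neg_one[OF R0] by simp
    ultimately have h1: "\<delta> - c * R powr (-1) \<ge> \<delta> / 2" by linarith
    have "(8 / \<delta>) powr (1 / e) < R" using RM unfolding M_def by simp
    hence "((8 / \<delta>) powr (1 / e)) powr e \<le> R powr e" using e0 by (intro powr_mono2) auto
    hence "8 / \<delta> \<le> R powr e" using e0 \<delta> by (simp add: powr_powr)
    hence h2: "D_k n a b k \<ge> 8 / \<delta>" unfolding D_k_def e_def R_def by simp
    have "4 = (8 / \<delta>) * (\<delta> / 2)" using \<delta> by simp
    also have "\<dots> \<le> D_k n a b k * (\<delta> - c * R_k k powr (-1))"
      using h1 h2 \<delta> D_pos[of n a b k] unfolding R_def by (intro mult_mono) auto
    finally show "D_k n a b k * (\<delta> - c * R_k k powr (-1)) \<ge> 4" .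
  qed
qed

lemma tail_dist_ge:
  assumes "i \<in> {1..<n}"
  shows "tail_dist n z w \<ge> \<bar>z i - w i\<bar>"
proof -
  have "(z i - w i)\<^sup>2 \<le> (\<Sum>i\<in>{1..<n}. (z i - w i)\<^sup>2)"
    using assms by (intro member_le_sum) auto
  hence "sqrt ((z i - w i)\<^sup>2) \<le> tail_dist n z w" unfolding tail_dist_def by (rule real_sqrt_le_mono)
  thus ?thesis by simp
qed

theorem lemma5p4:
  fixes n :: nat and a b :: real
  assumes "n \<ge> 2" and "3/4 < a" and "a \<le> 1" and "b = 1/2"
  shows "\<exists>c0>0. \<forall>c. 0 < c \<and> c < c0 \<longrightarrow>
    (\<forall>(x :: nat \<Rightarrow> real) \<delta>. in_Rn n x \<and> 0 < \<delta> \<and> \<delta> < 1 \<longrightarrow>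
      (\<forall>\<epsilon>>0. \<exists>C>0. \<exists>K. \<forall>k\<ge>K. \<exists>A'. A' \<subseteq> A_loc n a b c k x \<delta> \<and>
         real (card A') \<ge> C * R_k k powr (-\<epsilon>) * real (card (A_loc n a b c k x \<delta>)) \<and>
         (\<forall>z\<in>A'. \<forall>w\<in>A'. (\<exists>i\<in>{1..<n}. z i \<noteq> w i) \<longrightarrow>
            tail_dist n z w \<ge> C / (Q_k n a b k powr (real n / (real n - 1)) * D_k n a b k))))"
proof -
  note n = assms(1)
  have main: "\<exists>C>0. \<exists>K. \<forall>k\<ge>K. \<exists>A'. A' \<subseteq> A_loc n a b c k x \<delta> \<and>
         real (card A') \<ge> C * R_k k powr (-\<epsilon>) * real (card (A_loc n a b c k x \<delta>)) \<and>
         (\<forall>z\<in>A'. \<forall>w\<in>A'. (\<exists>i\<in>{1..<n}. z i \<noteq> w i) \<longrightarrow>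
            tail_dist n z w \<ge> C / (Q_k n a b k powr (real n / (real n - 1)) * D_k n a b k))"
    if c: "0 < c" and \<delta>: "0 < \<delta>" and \<epsilon>: "\<epsilon> > 0" for c :: real and x :: "nat \<Rightarrow> real" and \<delta> \<epsilon> :: real
  proof -
    define C where "C = 1 / (48 * (real n - 1))"
    have n1: "real n - 1 > 0" using n by simp
    have C0: "C > 0" unfolding C_def using n1 by simp
    have Chalf: "C \<le> 1/2" unfolding C_def using n by (simp add: field_simps)
    obtain K where K: "\<forall>k\<ge>K. D_k n a b k * (\<delta> - c * R_k k powr (-1)) \<ge> 4"
      using K_exists[OF n assms(3) assms(4) \<delta> c] by blast
    have "\<forall>k\<ge>K. \<exists>A'. A' \<subseteq> A_loc n a b c k x \<delta> \<and>
         real (card A') \<ge> C * R_k k powr (-\<epsilon>) * real (card (A_loc n a b c k x \<delta>)) \<and>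
         (\<forall>z\<in>A'. \<forall>w\<in>A'. (\<exists>i\<in>{1..<n}. z i \<noteq> w i) \<longrightarrow>
            tail_dist n z w \<ge> C / (Q_k n a b k powr (real n / (real n - 1)) * D_k n a b k))"
    proof (intro allI impI)
      fix k assume k: "k \<ge> K"
      define Z where "Z = A_loc n a b c k x \<delta>"
      show "\<exists>A'. A' \<subseteq> A_loc n a b c k x \<delta> \<and>
         real (card A') \<ge> C * R_k k powr (-\<epsilon>) * real (card (A_loc n a b c k x \<delta>)) \<and>
         (\<forall>z\<in>A'. \<forall>w\<in>A'. (\<exists>i\<in>{1..<n}. z i \<noteq> w i) \<longrightarrow>
            tail_dist n z w \<ge> C / (Q_k n a b k powr (real n / (real n - 1)) * D_k n a b k))"
      proof (cases "finite Z")
        case False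
        hence "card Z = 0" by simp
        then show ?thesis unfolding Z_def[symmetric] by (intro exI[of _ "{}"]) simp
      next
        case True
        define Q where "Q = Q_k n a b k"
        define D where "D = D_k n a b k"
        have Qge: "Q \<ge> 1" unfolding Q_def by (rule Q_ge1[OF n assms(2) assms(4)])
        have D0: "D > 0" unfolding D_def by (rule D_pos)
        define rs where "rs = C / Q powr (real n / (real n - 1))"
        have rs0: "rs > 0" unfolding rs_def using C0 Qge by simp
        have small: "(real n - 1) * (24*rs)^(n-1) * (Q_k n a b k)^n \<le> 1/2"
          using small_ok[OF n Qge] unfolding rs_def C_def Q_def by simp
        have rho: "C / (Q_k n a b k powr (real n / (real n - 1)) * D_k n a b k) = rs / D"
          unfolding rs_def Q_def D_def by simp
        define Bad where "Bad = {z \<in> Z. (\<exists>w\<in>Z. (\<exists>i\<in>{1..<n}. z i \<noteq> w i) \<and>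
            (\<forall>i\<in>{1..<n}. \<bar>z i - w i\<bar> < rs / D_k n a b k))}"
        have BZ: "Bad \<subseteq> Z" unfolding Bad_def by blast
        have fibre: "real (card {z \<in> Bad. z 0 = v}) \<le> real (card {z \<in> Z. z 0 = v}) / 2"
          if v: "v \<in> (\<lambda>z. z 0) ` Z" for v
        proof -
          obtain z0 where z0: "z0 \<in> Z" and vz: "v = z0 0" using v by blast
          have e: "{z \<in> Bad. z 0 = v} = {z \<in> A_loc n a b c k x \<delta>. (\<exists>w\<in>A_loc n a b c k x \<delta>. (\<exists>i\<in>{1..<n}. z i \<noteq> w i) \<and>
            (\<forall>i\<in>{1..<n}. \<bar>z i - w i\<bar> < rs / D_k n a b k)) \<and> z 0 = z0 0}"
            unfolding Bad_def Z_def vz by blast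
          show ?thesis unfolding e unfolding vz Z_def
            by (rule fiber[OF n c K[rule_format, OF k] Qge[unfolded Q_def] rs0 small z0[unfolded Z_def] True[unfolded Z_def]])
        qed
        have cB: "real (card Bad) \<le> real (card Z) / 2"
        proof -
          have "real (card Bad) = (\<Sum>v\<in>(\<lambda>z. z 0) ` Z. real (card {z \<in> Bad. z 0 = v}))"
            using card_fibers[OF True BZ, of "\<lambda>z. z 0"] by simp
          also have "\<dots> \<le> (\<Sum>v\<in>(\<lambda>z. z 0) ` Z. real (card {z \<in> Z. z 0 = v}) / 2)"
            by (rule sum_mono) (rule fibre)
          also have "\<dots> = real (card Z) / 2"
            using card_fibers[OF True subset_refl, of "\<lambda>z. z 0"] by (simp add: sum_divide_distrib)
          finally show ?thesis .
        qed
        define A' where "A' = Z - Bad"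
        have cA: "real (card A') = real (card Z) - real (card Bad)"
          unfolding A'_def using card_Diff_subset[OF finite_subset[OF BZ True] BZ] card_mono[OF True BZ]
          by simp
        have Rle: "R_k k powr (-\<epsilon>) \<le> 1"
        proof -
          have "1 \<le> R_k k powr \<epsilon>" using R_ge1[of k] \<epsilon> by (intro ge_one_powr_ge_zero) auto
          hence "1 / R_k k powr \<epsilon> \<le> 1 / 1" by (intro divide_left_mono) auto
          thus ?thesis by (simp add: powr_minus_divide)
        qed
        have "C * R_k k powr (-\<epsilon>) * real (card Z) \<le> (1/2) * 1 * real (card Z)"
          using Chalf Rle C0 by (intro mult_right_mono mult_mono) auto
        also have "\<dots> \<le> real (card A')" using cA cB by simp
        finally have card_ok: "C * R_k k powr (-\<epsilon>) * real (card Z) \<le> real (card A')" .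
        have sep: "tail_dist n z w \<ge> C / (Q_k n a b k powr (real n / (real n - 1)) * D_k n a b k)"
          if z: "z \<in> A'" and w: "w \<in> A'" and d: "\<exists>i\<in>{1..<n}. z i \<noteq> w i" for z w
        proof -
          have "z \<notin> Bad" "z \<in> Z" "w \<in> Z" using z w unfolding A'_def by auto
          then obtain i where i: "i \<in> {1..<n}" and ge: "\<not> \<bar>z i - w i\<bar> < rs / D_k n a b k"
            using d unfolding Bad_def by blast
          have "rs / D \<le> \<bar>z i - w i\<bar>" using ge unfolding D_def by simp
          also have "\<dots> \<le> tail_dist n z w" by (rule tail_dist_ge[OF i])
          finally show ?thesis unfolding rho .
        qed
        show ?thesis
          by (intro exI[of _ A'] conjI)
             (use card_ok sep in \<open>auto simp: A'_def Z_def\<close>)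
      qed
    qed
    then show ?thesis using C0 by blast
  qed
  show ?thesis
    apply (rule exI[of _ 1])
    apply (intro conjI allI impI)
     apply simp
    apply (rule main)
      apply auto
    done
qed

end
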